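(* Let $f(x)=\frac12x^\top Ax$ with $A\in\mathbb{R}^{d\times d}$ symmetric, $\eta>0$, and let $(x_k,v_k)$ be the leapfrog iterates from $(x_0,v_0)$: $v_{k+1/2}=v_k-\frac\eta2\nabla f(x_k)$, $x_{k+1}=x_k+\eta v_{k+1/2}$, $v_{k+1}=v_{k+1/2}-\frac\eta2\nabla f(x_{k+1})$. Then for every $k\ge0$, $$x_k=\Big(\sum_{j=0}^kD_{j,k}(\eta^2A)^j\Big)x_0+\eta\Big(\sum_{j=0}^{k-1}E_{j,k}(\eta^2A)^j\Big)v_0,$$ where $D_{j,k}=(-1)^j\frac{k}{k+j}\binom{k+j}{2j}$ (with $D_{0,0}=1$) and $E_{j,k}=(-1)^j\binom{k+j}{2j+1}$. *)

theory Defs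
  imports "HOL-Analysis.Analysis"
begin

primrec matpow :: "real^'n^'n \<Rightarrow> nat \<Rightarrow> real^'n^'n" where
  "matpow M 0 = mat 1"
| "matpow M (Suc j) = M ** matpow M j"

fun leapfrog :: "('a::real_vector \<Rightarrow> 'a) \<Rightarrow> real \<Rightarrow> 'a \<Rightarrow> 'a \<Rightarrow> nat \<Rightarrow> 'a \<times> 'a" where
  "leapfrog g eta x0 v0 0 = (x0, v0)"
| "leapfrog g eta x0 v0 (Suc k) =
     (let (x, v) = leapfrog g eta x0 v0 k;
          vh = v - (eta / 2) *\<^sub>R g x;
          x' = x + eta *\<^sub>R vh;
          v' = vh - (eta / 2) *\<^sub>R g x'
      in (x', v'))"

definition Dcoef :: "nat \<Rightarrow> nat \<Rightarrow> real" where
  "Dcoef j k = (if j = 0 \<and> k = 0 then 1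
               else (-1) ^ j * (real k / real (k + j)) * real ((k + j) choose (2 * j)))"

definition Ecoef :: "nat \<Rightarrow> nat \<Rightarrow> real" where
  "Ecoef j k = (-1) ^ j * real ((k + j) choose (2 * j + 1))"

end

theory Submission
  imports Defs
begin

lemma grad_eq:
  fixes A :: "real^'n^'n" and f :: "real^'n \<Rightarrow> real" and g :: "real^'n \<Rightarrow> real^'n"
  assumes symA: "transpose A = A"
    and f_def: "\<And>x. f x = (1/2) * (x \<bullet> (A *v x))"
    and g_grad: "\<And>x. GDERIV f x :> g x"
  shows "g x = A *v x"
proof -
  have lin: "bounded_linear (\<lambda>h. A *v h)"
    by (simp add: linear_conv_bounded_linear)
  have "((\<lambda>y. y \<bullet> (A *v y)) has_derivative (\<lambda>h. x \<bullet> (A *v h) + h \<bullet> (A *v x))) (at x)"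
    by (rule has_derivative_inner[OF has_derivative_ident bounded_linear.has_derivative[OF lin has_derivative_ident]])
  then have dd: "((\<lambda>y. (1/2) * (y \<bullet> (A *v y))) has_derivative (\<lambda>h. (1/2) * (x \<bullet> (A *v h) + h \<bullet> (A *v x)))) (at x)"
    by (rule has_derivative_mult_right)
  have hs: "\<And>h. x \<bullet> (A *v h) = h \<bullet> (A *v x)"
  proof -
    fix h
    have "x \<bullet> (A *v h) = (x v* A) \<bullet> h" by (simp add: dot_lmul_matrix)
    also have "x v* A = A *v x"
      using vector_transpose_matrix[of x A] symA by simp
    finally show "x \<bullet> (A *v h) = h \<bullet> (A *v x)" by (simp add: inner_commute)
  qed
  have d1: "(f has_derivative (\<lambda>h. h \<bullet> (A *v x))) (at x)"
  proof -
    have "f = (\<lambda>y. (1/2) * (y \<bullet> (A *v y)))" using f_def by (rule ext)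
    with dd hs show ?thesis by simp
  qed
  have d2: "(f has_derivative (\<lambda>h. h \<bullet> g x)) (at x)"
    using g_grad[of x] by (simp add: gderiv_def)
  have "(\<lambda>h. h \<bullet> (A *v x)) = (\<lambda>h. h \<bullet> g x)"
    by (rule has_derivative_unique[OF d1 d2])
  then have "(g x - A *v x) \<bullet> (g x - A *v x) = 0"
    by (metis inner_diff_right right_minus_eq)
  then show ?thesis by simp
qed

lemma binrec_nat: "(Suc (Suc n) choose Suc (Suc m)) + (n choose Suc (Suc m)) = 2 * (Suc n choose Suc (Suc m)) + (n choose m)"
  by simp

lemma binrec: "real (Suc (Suc n) choose Suc (Suc m)) = 2 * real (Suc n choose Suc (Suc m)) - real (n choose Suc (Suc m)) + real (n choose m)"
proof -
  have "real (Suc (Suc n) choose Suc (Suc m)) + real (n choose Suc (Suc m)) = 2 * real (Suc n choose Suc (Suc m)) + real (n choose m)"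
    using binrec_nat[of n m] by (metis (mono_tags) of_nat_add of_nat_mult of_nat_numeral)
  then show ?thesis by linarith
qed

lemma Dform: "Dcoef j k = (-1)^j * (real ((k+j) choose (2*j)) + real ((k+j-1) choose (2*j))) / 2"
proof (cases "k = 0")
  case True
  then show ?thesis by (cases j) (auto simp: Dcoef_def binomial_eq_0)
next
  case False
  have key: "(real k - real j) * real ((k+j) choose (2*j)) = real (k+j) * real ((k+j-1) choose (2*j))"
  proof (cases "j \<le> k")
    case True
    have "(k + j - 2*j) * ((k+j) choose (2*j)) = (k+j) * ((k+j-1) choose (2*j))"
      by (rule binomial_absorb_comp)
    then have "real (k + j - 2*j) * real ((k+j) choose (2*j)) = real (k+j) * real ((k+j-1) choose (2*j))"
      by (metis of_nat_mult)
    moreover have "real (k + j - 2*j) = real k - real j" using True by simp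
    ultimately show ?thesis by simp
  next
    case False
    then show ?thesis using \<open>k \<noteq> 0\<close> by (simp add: binomial_eq_0)
  qed
  have pos: "real (k+j) > 0" using False by simp
  have h: "real k / real (k+j) * real ((k+j) choose (2*j)) = (real ((k+j) choose (2*j)) + real ((k+j-1) choose (2*j))) / 2"
    using key pos by (simp add: field_simps)
  have "Dcoef j k = (-1)^j * (real k / real (k+j) * real ((k+j) choose (2*j)))"
    using False by (simp add: Dcoef_def)
  then show ?thesis by (simp only: h)
qed

lemma D_zero: "k < j \<Longrightarrow> Dcoef j k = 0"
  by (simp add: Dcoef_def binomial_eq_0)

lemma E_zero: "k \<le> j \<Longrightarrow> Ecoef j k = 0"
  by (simp add: Ecoef_def binomial_eq_0)

lemma Drec: "Dcoef j (k+2) = 2 * Dcoef j (k+1) - (if j = 0 then 0 else Dcoef (j-1) (k+1)) - Dcoef j k"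
proof (cases j)
  case 0
  then show ?thesis by (simp add: Dform)
next
  case (Suc i)
  have a: "real ((k+2+j) choose (2*j)) = 2 * real ((k+1+j) choose (2*j)) - real ((k+j) choose (2*j)) + real ((k+1+(j-1)) choose (2*(j-1)))"
    using binrec[of "k+j" "2*i"] Suc by (simp add: algebra_simps)
  have b: "real ((k+2+j-1) choose (2*j)) = 2 * real ((k+1+j-1) choose (2*j)) - real ((k+j-1) choose (2*j)) + real ((k+1+(j-1)-1) choose (2*(j-1)))"
    using binrec[of "k+i" "2*i"] Suc by (simp add: algebra_simps)
  have sg: "(-1::real)^j = -((-1)^(j-1))" using Suc by simp
  have nz: "j \<noteq> 0" using Suc by simp
  show ?thesis
    unfolding Dform a b sg using nz by (simp add: field_simps del: binomial_Suc_Suc)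
qed

lemma Erec: "Ecoef j (k+2) = 2 * Ecoef j (k+1) - (if j = 0 then 0 else Ecoef (j-1) (k+1)) - Ecoef j k"
proof (cases j)
  case 0
  then show ?thesis by (simp add: Ecoef_def)
next
  case (Suc i)
  have a: "real ((k+2+j) choose (2*j+1)) = 2 * real ((k+1+j) choose (2*j+1)) - real ((k+j) choose (2*j+1)) + real ((k+1+(j-1)) choose (2*(j-1)+1))"
    using binrec[of "k+j" "2*i+1"] Suc by (simp add: algebra_simps)
  have sg: "(-1::real)^j = -((-1)^(j-1))" using Suc by simp
  have nz: "j \<noteq> 0" using Suc by simp
  show ?thesis
    unfolding Ecoef_def a sg using nz by (simp add: field_simps del: binomial_Suc_Suc)
qed

definition Vs :: "real^'n^'n \<Rightarrow> (nat \<Rightarrow> real) \<Rightarrow> nat \<Rightarrow> real^'n \<Rightarrow> real^'n" where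
  "Vs B c n x = (\<Sum>j<n. c j *\<^sub>R (matpow B j *v x))"

lemma sumv: "(\<Sum>j<n. c j *\<^sub>R matpow B j) *v x = Vs B c n x"
  unfolding Vs_def
  by (induction n) (simp_all add: matrix_vector_mult_add_rdistrib scaleR_matrix_vector_assoc[symmetric])

lemma Vs_ext: "n \<le> N \<Longrightarrow> (\<And>j. n \<le> j \<Longrightarrow> c j = 0) \<Longrightarrow> Vs B c N x = Vs B c n x"
proof (induction N rule: dec_induct)
  case base then show ?case by simp
next
  case (step m) then show ?case by (simp add: Vs_def)
qed

lemma Vs_shift: "B *v Vs B c n x = Vs B (\<lambda>j. if j = 0 then 0 else c (j-1)) (Suc n) x"
proof -
  have lin: "linear (\<lambda>y. B *v y)" by simp
  have "B *v Vs B c n x = (\<Sum>j<n. c j *\<^sub>R (B *v (matpow B j *v x)))"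
    unfolding Vs_def by (simp add: linear_sum[OF lin] linear_scale[OF lin])
  also have "\<dots> = (\<Sum>j<n. c j *\<^sub>R (matpow B (Suc j) *v x))"
    by (simp add: matrix_vector_mul_assoc)
  also have "\<dots> = Vs B (\<lambda>j. if j = 0 then 0 else c (j-1)) (Suc n) x"
    unfolding Vs_def by (subst sum.lessThan_Suc_shift) simp
  finally show ?thesis .
qed

lemma Vs_comb: "Vs B (\<lambda>j. 2 * a j - b j - c j) N x = 2 *\<^sub>R Vs B a N x - Vs B b N x - Vs B c N x"
  unfolding Vs_def
  by (simp add: scaleR_diff_left sum_subtractf scaleR_sum_right scaleR_scaleR)

lemma Vs_cong: "(\<And>j. j < N \<Longrightarrow> a j = b j) \<Longrightarrow> Vs B a N x = Vs B b N x"
  unfolding Vs_def by simp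

lemma comb_aux:
  fixes a b c d f h :: "'a::real_vector"
  shows "2 *\<^sub>R (a + e *\<^sub>R b) - (c + e *\<^sub>R d) - (f + e *\<^sub>R h) = (2 *\<^sub>R a - c - f) + e *\<^sub>R (2 *\<^sub>R b - d - h)"
  by (simp add: algebra_simps)

lemma rec_aux:
  fixes a b c u y w0 w1 :: "'a::real_vector"
  assumes "a = b + w1 - (1/2) *\<^sub>R u" "w1 = w0 - (1/2) *\<^sub>R y - (1/2) *\<^sub>R u"
    "w0 = b - c + (1/2) *\<^sub>R y"
  shows "a = 2 *\<^sub>R b - u - c"
proof -
  have h: "(1/2) *\<^sub>R u + (1/2) *\<^sub>R u = u"
    by (simp add: scaleR_left_distrib[symmetric])
  have "a = b + b - c - ((1/2) *\<^sub>R u + (1/2) *\<^sub>R u)"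
    using assms by (simp add: algebra_simps)
  then show ?thesis using h by (simp add: scaleR_2)
qed

theorem lemma12:
  fixes A :: "real^'n^'n" and eta :: real and x0 v0 :: "real^'n"
    and f :: "real^'n \<Rightarrow> real" and g :: "real^'n \<Rightarrow> real^'n"
  assumes symA: "transpose A = A"
    and f_def: "\<And>x. f x = (1/2) * (x \<bullet> (A *v x))"
    and g_grad: "\<And>x. GDERIV f x :> g x"
    and eta_pos: "eta > 0"
  shows "\<forall>k. fst (leapfrog g eta x0 v0 k) =
           (\<Sum>j\<in>{0..k}. Dcoef j k *\<^sub>R matpow ((eta^2) *\<^sub>R A) j) *v x0
           + eta *\<^sub>R ((\<Sum>j\<in>{0..<k}. Ecoef j k *\<^sub>R matpow ((eta^2) *\<^sub>R A) j) *v v0)"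
proof -
  define B where "B = (eta^2) *\<^sub>R A"
  define X where "X k = fst (leapfrog g eta x0 v0 k)" for k
  define W where "W k = eta *\<^sub>R snd (leapfrog g eta x0 v0 k)" for k
  have gA: "\<And>x. g x = A *v x" by (rule grad_eq[OF symA f_def g_grad])
  have BA: "\<And>x. B *v x = (eta^2) *\<^sub>R (A *v x)"
    unfolding B_def by (simp add: scaleR_matrix_vector_assoc)
  have L: "X (Suc k) = X k + W k - (1/2) *\<^sub>R (B *v X k) \<and>
           W (Suc k) = W k - (1/2) *\<^sub>R (B *v X k) - (1/2) *\<^sub>R (B *v X (Suc k))" for k
  proof -
    obtain x v where xv: "leapfrog g eta x0 v0 k = (x, v)" by fastforce
    define vh where "vh = v - (eta/2) *\<^sub>R (A *v x)"
    define x' where "x' = x + eta *\<^sub>R vh"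
    have s: "leapfrog g eta x0 v0 (Suc k) = (x', vh - (eta/2) *\<^sub>R (A *v x'))"
      using xv by (simp add: Let_def gA vh_def x'_def)
    have e1: "x' = x + eta *\<^sub>R v - (1/2) *\<^sub>R (B *v x)"
      unfolding x'_def vh_def BA by (simp add: scaleR_diff_right power2_eq_square)
    have e2: "eta *\<^sub>R (vh - (eta/2) *\<^sub>R (A *v x')) = eta *\<^sub>R v - (1/2) *\<^sub>R (B *v x) - (1/2) *\<^sub>R (B *v x')"
      unfolding vh_def BA by (simp add: scaleR_diff_right power2_eq_square)
    show ?thesis
      unfolding X_def W_def s xv using e1 e2 by simp
  qed
  have rec: "X (Suc (Suc k)) = 2 *\<^sub>R X (Suc k) - B *v X (Suc k) - X k" for k
  proof -
    have a: "X (Suc (Suc k)) = X (Suc k) + W (Suc k) - (1/2) *\<^sub>R (B *v X (Suc k))"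
      using L[of "Suc k"] by simp
    have b: "W k = X (Suc k) - X k + (1/2) *\<^sub>R (B *v X k)" using L[of k] by simp
    show ?thesis using rec_aux[OF a conjunct2[OF L[of k]] b] .
  qed
  define P where "P k \<longleftrightarrow> (\<forall>N. k + 1 \<le> N \<longrightarrow>
      X k = Vs B (\<lambda>j. Dcoef j k) N x0 + eta *\<^sub>R Vs B (\<lambda>j. Ecoef j k) N v0)" for k
  have P01: "P 0 \<and> P 1"
  proof
    show "P 0" unfolding P_def
    proof (intro allI impI)
      fix N :: nat assume N: "0 + 1 \<le> N"
      have "Vs B (\<lambda>j. Dcoef j 0) N x0 = Vs B (\<lambda>j. Dcoef j 0) 1 x0"
        by (rule Vs_ext) (use N in \<open>auto intro: D_zero\<close>)
      moreover have "Vs B (\<lambda>j. Ecoef j 0) N v0 = Vs B (\<lambda>j. Ecoef j 0) 0 v0"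
        by (rule Vs_ext) (auto intro: E_zero)
      ultimately show "X 0 = Vs B (\<lambda>j. Dcoef j 0) N x0 + eta *\<^sub>R Vs B (\<lambda>j. Ecoef j 0) N v0"
        by (simp add: X_def Vs_def Dcoef_def)
    qed
    show "P 1" unfolding P_def
    proof (intro allI impI)
      fix N :: nat assume N: "1 + 1 \<le> N"
      have "Vs B (\<lambda>j. Dcoef j 1) N x0 = Vs B (\<lambda>j. Dcoef j 1) 2 x0"
        by (rule Vs_ext) (use N in \<open>auto intro: D_zero\<close>)
      also have "\<dots> = x0 - (1/2) *\<^sub>R (B *v x0)"
        by (simp add: Vs_def Dcoef_def numeral_2_eq_2)
      finally have d: "Vs B (\<lambda>j. Dcoef j 1) N x0 = x0 - (1/2) *\<^sub>R (B *v x0)" .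
      have "Vs B (\<lambda>j. Ecoef j 1) N v0 = Vs B (\<lambda>j. Ecoef j 1) 1 v0"
        by (rule Vs_ext) (use N in \<open>auto intro: E_zero\<close>)
      also have "\<dots> = v0" by (simp add: Vs_def Ecoef_def)
      finally have e: "Vs B (\<lambda>j. Ecoef j 1) N v0 = v0" .
      have X0: "X 0 = x0" by (simp add: X_def)
      have W0: "W 0 = eta *\<^sub>R v0" by (simp add: W_def)
      have "X 1 = x0 + eta *\<^sub>R v0 - (1/2) *\<^sub>R (B *v x0)" using L[of 0] by (simp add: X0 W0)
      then show "X 1 = Vs B (\<lambda>j. Dcoef j 1) N x0 + eta *\<^sub>R Vs B (\<lambda>j. Ecoef j 1) N v0"
        unfolding d e by simp
    qed
  qed
  have step: "P k \<Longrightarrow> P (Suc k) \<Longrightarrow> P (Suc (Suc k))" for k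
  proof -
    assume P0: "P k" and P1: "P (Suc k)"
    show "P (Suc (Suc k))" unfolding P_def
    proof (intro allI impI)
      fix N :: nat assume N: "Suc (Suc k) + 1 \<le> N"
      define sh where "sh c j = (if j = 0 then 0 else c (j - 1))" for c :: "nat \<Rightarrow> real" and j
      let ?D0 = "\<lambda>j. Dcoef j k" and ?D1 = "\<lambda>j. Dcoef j (Suc k)" and ?D2 = "\<lambda>j. Dcoef j (Suc (Suc k))"
      let ?E0 = "\<lambda>j. Ecoef j k" and ?E1 = "\<lambda>j. Ecoef j (Suc k)" and ?E2 = "\<lambda>j. Ecoef j (Suc (Suc k))"
      have x0e: "X k = Vs B ?D0 N x0 + eta *\<^sub>R Vs B ?E0 N v0" using P0 N unfolding P_def by simp
      have x1e: "X (Suc k) = Vs B ?D1 N x0 + eta *\<^sub>R Vs B ?E1 N v0" using P1 N unfolding P_def by simp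
      have lin: "linear (\<lambda>y. B *v y)" by simp
      have shD: "B *v Vs B ?D1 N x0 = Vs B (sh ?D1) N x0"
        unfolding Vs_shift sh_def[abs_def]
        by (rule Vs_ext) (use N in \<open>auto intro: D_zero\<close>)
      have shE: "B *v Vs B ?E1 N v0 = Vs B (sh ?E1) N v0"
        unfolding Vs_shift sh_def[abs_def]
        by (rule Vs_ext) (use N in \<open>auto intro: E_zero\<close>)
      have bx: "B *v X (Suc k) = Vs B (sh ?D1) N x0 + eta *\<^sub>R Vs B (sh ?E1) N v0"
        unfolding x1e linear_add[OF lin] linear_scale[OF lin] shD shE ..
      have D2: "Vs B ?D2 N x0 = Vs B (\<lambda>j. 2 * ?D1 j - sh ?D1 j - ?D0 j) N x0"
        by (rule Vs_cong) (use Drec[of _ k] in \<open>simp add: sh_def\<close>)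
      have E2: "Vs B ?E2 N v0 = Vs B (\<lambda>j. 2 * ?E1 j - sh ?E1 j - ?E0 j) N v0"
        by (rule Vs_cong) (use Erec[of _ k] in \<open>simp add: sh_def\<close>)
      show "X (Suc (Suc k)) = Vs B ?D2 N x0 + eta *\<^sub>R Vs B ?E2 N v0"
        unfolding rec D2 E2 Vs_comb bx unfolding x1e x0e by (rule comb_aux)
    qed
  qed
  have allP: "P k \<and> P (Suc k)" for k
    by (induction k) (use P01 step in auto)
  show ?thesis
  proof
    fix k
    have "X k = Vs B (\<lambda>j. Dcoef j k) (Suc k) x0 + eta *\<^sub>R Vs B (\<lambda>j. Ecoef j k) (Suc k) v0"
      using allP[of k] unfolding P_def by simp
    also have "Vs B (\<lambda>j. Ecoef j k) (Suc k) v0 = Vs B (\<lambda>j. Ecoef j k) k v0"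
      by (rule Vs_ext) (auto intro: E_zero)
    finally show "fst (leapfrog g eta x0 v0 k) =
           (\<Sum>j\<in>{0..k}. Dcoef j k *\<^sub>R matpow ((eta^2) *\<^sub>R A) j) *v x0
           + eta *\<^sub>R ((\<Sum>j\<in>{0..<k}. Ecoef j k *\<^sub>R matpow ((eta^2) *\<^sub>R A) j) *v v0)"
      unfolding X_def B_def[symmetric] atLeast0AtMost atLeast0LessThan lessThan_Suc_atMost[symmetric] sumv .
  qed
qed

end
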